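(* Let $\mathcal{X}\subset\mathbb{R}^d$ be a convex compact set with non-empty interior, let $k\ge 0$ and let $f\in\mathrm{Lip}(k)$. Let $t\ge1$ and let $x_1,\dots,x_t\in\mathcal{X}$ be evaluated points. Then for every $\varepsilon\in(0,k]$ we have $\mathcal{A}_{\varepsilon,t}\subseteq\mathcal{P}_{k,t}$, and for every $\varepsilon>k$ we have $\mathcal{P}_{k,t}\subseteq\mathcal{A}_{\varepsilon,t}$.
   Context: $\mathrm{Lip}(k)=\{g:\mathcal{X}\to\mathbb{R}:\ |g(x)-g(x')|\le k\|x-x'\|_2\ \forall x,x'\in\mathcal{X}\}$. For $\varepsilon>0$, the acceptance region is $\mathcal{A}_{\varepsilon,t}=\{x\in\mathcal{X}: \min_{i=1,\dots,t}(f(x_i)+\varepsilon\|x-x_i\|_2)\ge\max_{j=1,\dots,t}f(x_j)\}$. The set of consistent functions is $\mathcal{F}_{k,t}=\{g\in\mathrm{Lip}(k): g(x_i)=f(x_i)\ \forall i\in\{1,\dots,t\}\}$, and the set of potential maximizers is $\mathcal{P}_{k,t}=\{x\in\mathcal{X}:\ \exists g\in\mathcal{F}_{k,t}\text{ with } x\in\arg\max_{x'\in\mathcal{X}}g(x')\}$. *)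

theory Defs
  imports "HOL-Analysis.Analysis"
begin

text \<open>Lip(k) on the domain X: functions X -> R that are k-Lipschitz w.r.t. the Euclidean norm.
  Functions are total in HOL; only their values on X matter.\<close>
definition Lip :: "'a::euclidean_space set \<Rightarrow> real \<Rightarrow> ('a \<Rightarrow> real) set" where
  "Lip X k = {g. \<forall>x\<in>X. \<forall>x'\<in>X. \<bar>g x - g x'\<bar> \<le> k * norm (x - x')}"

definition acceptance_region ::
  "'a::euclidean_space set \<Rightarrow> ('a \<Rightarrow> real) \<Rightarrow> (nat \<Rightarrow> 'a) \<Rightarrow> nat \<Rightarrow> real \<Rightarrow> 'a set" where
  "acceptance_region X f xs t \<epsilon> =
     {x\<in>X. (MIN i\<in>{1..t}. f (xs i) + \<epsilon> * norm (x - xs i)) \<ge> (MAX j\<in>{1..t}. f (xs j))}"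

definition consistent_functions ::
  "'a::euclidean_space set \<Rightarrow> real \<Rightarrow> ('a \<Rightarrow> real) \<Rightarrow> (nat \<Rightarrow> 'a) \<Rightarrow> nat \<Rightarrow> ('a \<Rightarrow> real) set" where
  "consistent_functions X k f xs t = {g\<in>Lip X k. \<forall>i\<in>{1..t}. g (xs i) = f (xs i)}"

definition potential_maximizers ::
  "'a::euclidean_space set \<Rightarrow> real \<Rightarrow> ('a \<Rightarrow> real) \<Rightarrow> (nat \<Rightarrow> 'a) \<Rightarrow> nat \<Rightarrow> 'a set" where
  "potential_maximizers X k f xs t =
     {x\<in>X. \<exists>g\<in>consistent_functions X k f xs t. \<forall>x'\<in>X. g x' \<le> g x}"

end

theory Submission
  imports Defs
begin

lemma U_lip:
  fixes xs :: "nat \<Rightarrow> 'a::euclidean_space" and c :: "nat \<Rightarrow> real"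
  assumes "t \<ge> 1" and "k \<ge> 0"
  shows "(MIN i\<in>{1..t}. c i + k * norm (y - xs i)) \<le> (MIN i\<in>{1..t}. c i + k * norm (y' - xs i)) + k * norm (y - y')"
proof -
  have ne: "(\<lambda>i. c i + k * norm (y' - xs i)) ` {1..t} \<noteq> {}" using assms by auto
  obtain i where i: "i \<in> {1..t}" and eq: "(MIN i\<in>{1..t}. c i + k * norm (y' - xs i)) = c i + k * norm (y' - xs i)"
    using Min_in[OF _ ne] by auto
  have "(MIN i\<in>{1..t}. c i + k * norm (y - xs i)) \<le> c i + k * norm (y - xs i)"
    using i by (intro Min_le) auto
  also have "norm (y - xs i) \<le> norm (y - y') + norm (y' - xs i)"
    using norm_triangle_ineq[of "y - y'" "y' - xs i"] by simp
  then have "c i + k * norm (y - xs i) \<le> c i + k * norm (y' - xs i) + k * norm (y - y')"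
    using assms(2) by (smt (verit) mult_left_mono distrib_left)
  finally show ?thesis using eq by simp
qed

theorem proposition2:
  fixes X :: "'a::euclidean_space set" and k :: real and f :: "'a \<Rightarrow> real"
    and xs :: "nat \<Rightarrow> 'a" and t :: nat
  assumes "convex X" and "compact X" and "interior X \<noteq> {}"
    and "k \<ge> 0" and "f \<in> Lip X k"
    and "t \<ge> 1" and "\<forall>i\<in>{1..t}. xs i \<in> X"
  shows "(\<forall>\<epsilon>. 0 < \<epsilon> \<and> \<epsilon> \<le> k \<longrightarrow>
            acceptance_region X f xs t \<epsilon> \<subseteq> potential_maximizers X k f xs t)
       \<and> (\<forall>\<epsilon>. \<epsilon> > k \<longrightarrow>
            potential_maximizers X k f xs t \<subseteq> acceptance_region X f xs t \<epsilon>)"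
proof (intro conjI allI impI subsetI)
  have fin: "finite {1..t}" and ne: "{1..t} \<noteq> {}" using assms(6) by auto
  define M where "M = (MAX j\<in>{1..t}. f (xs j))"
  have fM: "f (xs j) \<le> M" if "j \<in> {1..t}" for j
    unfolding M_def using that by (intro Max_ge) auto
  {
    fix \<epsilon> x assume e: "0 < \<epsilon> \<and> \<epsilon> \<le> k" and x: "x \<in> acceptance_region X f xs t \<epsilon>"
    define U where "U y = (MIN i\<in>{1..t}. f (xs i) + k * norm (y - xs i))" for y
    define g where "g y = min (U y) M" for y
    have xX: "x \<in> X" using x unfolding acceptance_region_def by auto
    have xA: "\<forall>i\<in>{1..t}. M \<le> f (xs i) + \<epsilon> * norm (x - xs i)"
      using x fin ne unfolding acceptance_region_def M_def by auto
    have "\<forall>i\<in>{1..t}. M \<le> f (xs i) + k * norm (x - xs i)"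
    proof
      fix i assume "i \<in> {1..t}"
      then show "M \<le> f (xs i) + k * norm (x - xs i)"
        using xA e mult_right_mono[of \<epsilon> k "norm (x - xs i)"] by force
    qed
    then have "M \<le> U x" unfolding U_def using fin ne by (simp add: Min_ge_iff)
    then have gx: "g x = M" unfolding g_def by simp
    have lipU: "U y \<le> U y' + k * norm (y - y')" for y y'
      unfolding U_def by (rule U_lip[OF assms(6) assms(4)])
    have glip: "\<bar>g y - g y'\<bar> \<le> k * norm (y - y')" for y y'
    proof -
      have "U y \<le> U y' + k * norm (y - y')" "U y' \<le> U y + k * norm (y - y')"
        using lipU[of y y'] lipU[of y' y] by (auto simp: norm_minus_commute)
      moreover have "0 \<le> k * norm (y - y')" using assms(4) by simp
      ultimately show ?thesis unfolding g_def by linarith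
    qed
    have gcons: "g (xs j) = f (xs j)" if j: "j \<in> {1..t}" for j
    proof -
      have "\<forall>i\<in>{1..t}. f (xs j) \<le> f (xs i) + k * norm (xs j - xs i)"
      proof
        fix i
        assume i: "i \<in> {1..t}"
        have "\<bar>f (xs j) - f (xs i)\<bar> \<le> k * norm (xs j - xs i)"
          using assms(5,7) j i unfolding Lip_def by blast
        then show "f (xs j) \<le> f (xs i) + k * norm (xs j - xs i)" by linarith
      qed
      then have "f (xs j) \<le> U (xs j)" unfolding U_def using fin ne by (simp add: Min_ge_iff)
      moreover have "U (xs j) \<le> f (xs j)" unfolding U_def using j fin by (intro Min_le) (auto intro!: image_eqI[where x=j])
      ultimately show ?thesis using fM[OF j] unfolding g_def by simp
    qed
    have "g \<in> consistent_functions X k f xs t"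
      unfolding consistent_functions_def Lip_def using glip gcons by auto
    moreover have "\<forall>x'\<in>X. g x' \<le> g x" using gx unfolding g_def by simp
    ultimately show "x \<in> potential_maximizers X k f xs t"
      unfolding potential_maximizers_def using xX by blast
  }
  {
    fix \<epsilon> x assume e: "\<epsilon> > k" and x: "x \<in> potential_maximizers X k f xs t"
    then obtain g where xX: "x \<in> X" and g: "g \<in> consistent_functions X k f xs t"
      and gm: "\<forall>x'\<in>X. g x' \<le> g x" unfolding potential_maximizers_def by blast
    have glip: "\<forall>y\<in>X. \<forall>y'\<in>X. \<bar>g y - g y'\<bar> \<le> k * norm (y - y')"
      and gc: "\<forall>i\<in>{1..t}. g (xs i) = f (xs i)"
      using g unfolding consistent_functions_def Lip_def by auto
    have "M \<le> g x" unfolding M_def using fin ne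
      using gm gc assms(7) by (subst Max_le_iff) (auto, metis atLeastAtMost_iff One_nat_def)
    moreover have "g x \<le> f (xs i) + \<epsilon> * norm (x - xs i)" if i: "i \<in> {1..t}" for i
    proof -
      have "\<bar>g x - g (xs i)\<bar> \<le> k * norm (x - xs i)" using glip xX assms(7) i by blast
      moreover have "k * norm (x - xs i) \<le> \<epsilon> * norm (x - xs i)"
        using e by (intro mult_right_mono) auto
      ultimately show ?thesis using gc i by auto
    qed
    ultimately have "\<forall>i\<in>{1..t}. M \<le> f (xs i) + \<epsilon> * norm (x - xs i)" by force
    then show "x \<in> acceptance_region X f xs t \<epsilon>"
      unfolding acceptance_region_def M_def using xX fin ne by (subst Min_ge_iff) auto
  }
qed

end
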